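(* Let $G$ be a group and $\rho:(X,G)\to(Y,G)$ a factor map of topological dynamical systems which is an $n$-to-$1$ extension, with $(X,G)$ minimal. Suppose an abelian group $H$ acts continuously on $X$, commuting with the $G$-action, preserving the fibres of $\rho$ and acting transitively on each fibre. Suppose $(X,G)\xrightarrow{\rho'}(Z,G)\xrightarrow{\rho''}(Y,G)$ are factor maps with $\rho''\circ\rho'=\rho$. Then $(Z,G)$ is an $m$-to-$1$ extension of $(Y,G)$ (via $\rho''$) with $m$ dividing $n$, and there is a subgroup $H'\subset H$ such that (i) $H/H'$ acts continuously on $Z$, commuting with the $G$-action, preserving the fibres of $\rho''$ and acting transitively on each fibre; and (ii) $H'$, acting on $X$ by restriction of the $H$-action, preserves the fibres of $\rho'$ and acts transitively on each fibre.
   Context: A topological dynamical system $(X,G)$ is a compact Hausdorff space $X$ with a continuous action of $G$; it is minimal if every orbit is dense. A factor map is a continuous $G$-equivariant surjection. A factor map $\rho:(X,G)\to(Y,G)$ is an $n$-to-$1$ extension if every fibre $\rho^{-1}(y)$ has the same finite cardinality $n$. *)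

theory Defs
  imports "HOL-Analysis.Analysis" "HOL-Algebra.Group_Action" "HOL-Algebra.Coset"
begin

text \<open>A topological dynamical system: a compact Hausdorff space X together with
an action of the group G on the carrier of X by continuous maps (G carries no topology).\<close>
definition tds :: "'g monoid \<Rightarrow> 'x topology \<Rightarrow> ('g \<Rightarrow> 'x \<Rightarrow> 'x) \<Rightarrow> bool" where
  "tds G X \<phi> \<longleftrightarrow> compact_space X \<and> Hausdorff_space X \<and>
     group_action G (topspace X) \<phi> \<and> (\<forall>g\<in>carrier G. continuous_map X X (\<phi> g))"

definition minimal_tds :: "'g monoid \<Rightarrow> 'x topology \<Rightarrow> ('g \<Rightarrow> 'x \<Rightarrow> 'x) \<Rightarrow> bool" where
  "minimal_tds G X \<phi> \<longleftrightarrow> tds G X \<phi> \<and>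
     (\<forall>x\<in>topspace X. X closure_of (orbit G \<phi> x) = topspace X)"

definition factor_map :: "'g monoid \<Rightarrow> 'x topology \<Rightarrow> ('g \<Rightarrow> 'x \<Rightarrow> 'x) \<Rightarrow>
    'y topology \<Rightarrow> ('g \<Rightarrow> 'y \<Rightarrow> 'y) \<Rightarrow> ('x \<Rightarrow> 'y) \<Rightarrow> bool" where
  "factor_map G X \<phi> Y \<psi> \<rho> \<longleftrightarrow> tds G X \<phi> \<and> tds G Y \<psi> \<and>
     continuous_map X Y \<rho> \<and> \<rho> ` topspace X = topspace Y \<and>
     (\<forall>g\<in>carrier G. \<forall>x\<in>topspace X. \<rho> (\<phi> g x) = \<psi> g (\<rho> x))"

definition fibre :: "'x topology \<Rightarrow> ('x \<Rightarrow> 'y) \<Rightarrow> 'y \<Rightarrow> 'x set" where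
  "fibre X \<rho> y = {x \<in> topspace X. \<rho> x = y}"

definition n_to_one :: "'g monoid \<Rightarrow> 'x topology \<Rightarrow> ('g \<Rightarrow> 'x \<Rightarrow> 'x) \<Rightarrow>
    'y topology \<Rightarrow> ('g \<Rightarrow> 'y \<Rightarrow> 'y) \<Rightarrow> ('x \<Rightarrow> 'y) \<Rightarrow> nat \<Rightarrow> bool" where
  "n_to_one G X \<phi> Y \<psi> \<rho> n \<longleftrightarrow> factor_map G X \<phi> Y \<psi> \<rho> \<and>
     (\<forall>y\<in>topspace Y. finite (fibre X \<rho> y) \<and> card (fibre X \<rho> y) = n)"

definition fibre_transitive_action :: "('k, 'm) monoid_scheme \<Rightarrow> ('k \<Rightarrow> 'x \<Rightarrow> 'x) \<Rightarrow>
    'g monoid \<Rightarrow> 'x topology \<Rightarrow> ('g \<Rightarrow> 'x \<Rightarrow> 'x) \<Rightarrow> ('x \<Rightarrow> 'y) \<Rightarrow> bool" where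
  "fibre_transitive_action K \<kappa> G X \<phi> \<rho> \<longleftrightarrow>
     group_action K (topspace X) \<kappa> \<and>
     (\<forall>k\<in>carrier K. continuous_map X X (\<kappa> k)) \<and>
     (\<forall>k\<in>carrier K. \<forall>g\<in>carrier G. \<forall>x\<in>topspace X. \<kappa> k (\<phi> g x) = \<phi> g (\<kappa> k x)) \<and>
     (\<forall>k\<in>carrier K. \<forall>x\<in>topspace X. \<rho> (\<kappa> k x) = \<rho> x) \<and>
     (\<forall>x\<in>topspace X. \<forall>x'\<in>topspace X. \<rho> x = \<rho> x' \<longrightarrow> (\<exists>k\<in>carrier K. \<kappa> k x = x'))"

end

theory Submission
  imports Defs
begin

lemma minimal_closed_invariant:
  assumes "minimal_tds G X \<phi>" "closedin X A" "x \<in> A"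
    "\<forall>g\<in>carrier G. \<forall>a\<in>A. \<phi> g a \<in> A"
  shows "A = topspace X"
proof -
  have sub: "A \<subseteq> topspace X" using assms(2) closedin_subset by blast
  have "orbit G \<phi> x \<subseteq> A" using assms(3,4) unfolding orbit_def by blast
  hence "X closure_of (orbit G \<phi> x) \<subseteq> A" using assms(2) closure_of_minimal by blast
  moreover have "X closure_of (orbit G \<phi> x) = topspace X"
    using assms(1,3) sub unfolding minimal_tds_def by blast
  ultimately show ?thesis using sub by blast
qed

lemma group_action_intro:
  assumes K: "group K"
    and ext: "\<forall>k\<in>carrier K. f k \<in> extensional E"
    and into: "\<forall>k\<in>carrier K. \<forall>x\<in>E. f k x \<in> E"
    and comp: "\<forall>a\<in>carrier K. \<forall>b\<in>carrier K. \<forall>x\<in>E. f (a \<otimes>\<^bsub>K\<^esub> b) x = f a (f b x)"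
    and one: "\<forall>x\<in>E. f \<one>\<^bsub>K\<^esub> x = x"
  shows "group_action K E f"
proof -
  have inv1: "f (inv\<^bsub>K\<^esub> k) (f k x) = x" if "k \<in> carrier K" "x \<in> E" for k x
    using comp one that K by (metis group.inv_closed group.l_inv)
  have inv2: "f k (f (inv\<^bsub>K\<^esub> k) x) = x" if "k \<in> carrier K" "x \<in> E" for k x
    using comp one that K by (metis group.inv_closed group.r_inv)
  have bij: "f k \<in> Bij E" if k: "k \<in> carrier K" for k
  proof -
    have "inj_on (f k) E"
      by (metis inj_onI inv1 k)
    moreover have "f k ` E = E"
    proof
      show "f k ` E \<subseteq> E" using into k by blast
      show "E \<subseteq> f k ` E"
        by (metis K group.inv_closed image_eqI into inv2 k subsetI)
    qed
    ultimately show ?thesis using ext k unfolding Bij_def bij_betw_def by blast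
  qed
  have hom: "f \<in> hom K (BijGroup E)"
  proof (rule homI)
    show "f x \<in> carrier (BijGroup E)" if "x \<in> carrier K" for x
      using bij that by (simp add: BijGroup_def)
    show "f (x \<otimes>\<^bsub>K\<^esub> y) = f x \<otimes>\<^bsub>BijGroup E\<^esub> f y"
      if "x \<in> carrier K" "y \<in> carrier K" for x y
    proof -
      have "f x \<otimes>\<^bsub>BijGroup E\<^esub> f y = compose E (f x) (f y)"
        using bij that by (simp add: BijGroup_def)
      moreover have "f (x \<otimes>\<^bsub>K\<^esub> y) = compose E (f x) (f y)"
      proof
        fix z
        have xy: "x \<otimes>\<^bsub>K\<^esub> y \<in> carrier K"
          using monoid.m_closed[OF group.is_monoid[OF K]] that by blast
        show "f (x \<otimes>\<^bsub>K\<^esub> y) z = compose E (f x) (f y) z"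
        proof (cases "z \<in> E")
          case True
          then show ?thesis using comp that by (simp add: compose_eq)
        next
          case False
          then show ?thesis using ext xy unfolding compose_def extensional_def by simp
        qed
      qed
      ultimately show ?thesis by simp
    qed
  qed
  show ?thesis
    unfolding group_action_def group_hom_def group_hom_axioms_def
    using K group_BijGroup hom by blast
qed

theorem lemmaI2p14:
  fixes G :: "'g monoid" and H :: "'h monoid"
    and X :: "'x topology" and Y :: "'y topology" and Z :: "'z topology"
    and \<phi>X :: "'g \<Rightarrow> 'x \<Rightarrow> 'x" and \<phi>Y :: "'g \<Rightarrow> 'y \<Rightarrow> 'y" and \<phi>Z :: "'g \<Rightarrow> 'z \<Rightarrow> 'z"
    and \<rho> :: "'x \<Rightarrow> 'y" and \<rho>' :: "'x \<Rightarrow> 'z" and \<rho>'' :: "'z \<Rightarrow> 'y"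
    and \<psi> :: "'h \<Rightarrow> 'x \<Rightarrow> 'x" and n :: nat
  assumes "group G"
    and "minimal_tds G X \<phi>X"
    and "n_to_one G X \<phi>X Y \<phi>Y \<rho> n"
    and "comm_group H"
    and "fibre_transitive_action H \<psi> G X \<phi>X \<rho>"
    and "factor_map G X \<phi>X Z \<phi>Z \<rho>'"
    and "factor_map G Z \<phi>Z Y \<phi>Y \<rho>''"
    and "\<forall>x\<in>topspace X. \<rho>'' (\<rho>' x) = \<rho> x"
  shows "\<exists>m. m dvd n \<and> n_to_one G Z \<phi>Z Y \<phi>Y \<rho>'' m \<and>
           (\<exists>H'. subgroup H' H \<and>
              (\<exists>\<theta>::'h set \<Rightarrow> 'z \<Rightarrow> 'z. fibre_transitive_action (H Mod H') \<theta> G Z \<phi>Z \<rho>'') \<and>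
              fibre_transitive_action (H\<lparr>carrier := H'\<rparr>) \<psi> G X \<phi>X \<rho>')"
proof -
  define E where "E = topspace X"
  have minX: "minimal_tds G X \<phi>X" by fact
  have cX: "compact_space X" and hX: "Hausdorff_space X" and gaX: "group_action G E \<phi>X"
    and ctX: "\<forall>g\<in>carrier G. continuous_map X X (\<phi>X g)"
    using assms(2) unfolding minimal_tds_def tds_def E_def by auto
  have fm: "factor_map G X \<phi>X Y \<phi>Y \<rho>" and fibn: "\<forall>y\<in>topspace Y. finite (fibre X \<rho> y) \<and> card (fibre X \<rho> y) = n"
    using assms(3) unfolding n_to_one_def by auto
  have surj\<rho>: "\<rho> ` E = topspace Y" using fm unfolding factor_map_def E_def by auto
  have HC: "comm_group H" by fact
  interpret Hg: comm_group H by fact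
  have HG: "group H" using HC comm_group.axioms(2) by blast
  have gaH: "group_action H E \<psi>" and ctH: "\<forall>k\<in>carrier H. continuous_map X X (\<psi> k)"
    and comH: "\<forall>k\<in>carrier H. \<forall>g\<in>carrier G. \<forall>x\<in>E. \<psi> k (\<phi>X g x) = \<phi>X g (\<psi> k x)"
    and presH: "\<forall>k\<in>carrier H. \<forall>x\<in>E. \<rho> (\<psi> k x) = \<rho> x"
    and trH: "\<forall>x\<in>E. \<forall>x'\<in>E. \<rho> x = \<rho> x' \<longrightarrow> (\<exists>k\<in>carrier H. \<psi> k x = x')"
    using assms(5) unfolding fibre_transitive_action_def E_def by auto
  have hZ: "Hausdorff_space Z" and cZ: "compact_space Z"
    and ct': "continuous_map X Z \<rho>'" and surj': "\<rho>' ` E = topspace Z"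
    and eq': "\<forall>g\<in>carrier G. \<forall>x\<in>E. \<rho>' (\<phi>X g x) = \<phi>Z g (\<rho>' x)"
    using assms(6) unfolding factor_map_def tds_def E_def by auto
  have surj'': "\<rho>'' ` topspace Z = topspace Y"
    using assms(7) unfolding factor_map_def by auto
  have comp: "\<forall>x\<in>E. \<rho>'' (\<rho>' x) = \<rho> x" using assms(8) E_def by simp
  have \<psi>E: "\<psi> k x \<in> E" if "k \<in> carrier H" "x \<in> E" for k x
    using gaH that group_action.element_image by fastforce
  have \<phi>E: "\<phi>X g x \<in> E" if "g \<in> carrier G" "x \<in> E" for g x
    using gaX that group_action.element_image by fastforce
  have \<psi>comp: "\<psi> (a \<otimes>\<^bsub>H\<^esub> b) x = \<psi> a (\<psi> b x)" if "a \<in> carrier H" "b \<in> carrier H" "x \<in> E" for a b x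
    using gaH that group_action.composition_rule by fastforce
  have \<psi>one: "\<psi> \<one>\<^bsub>H\<^esub> x = x" if "x \<in> E" for x
    using group_action.id_eq_one[OF gaH] that by (metis restrict_apply')
  have \<psi>ext: "\<psi> k \<in> extensional E" if "k \<in> carrier H" for k
    using group_action.bij_prop0[OF gaH that] Bij_imp_extensional by blast
  have Hinv: "inv\<^bsub>H\<^esub> k \<in> carrier H" if "k \<in> carrier H" for k
    using HG that by simp
  have Hmul: "a \<otimes>\<^bsub>H\<^esub> b \<in> carrier H" if "a \<in> carrier H" "b \<in> carrier H" for a b
    using that by simp

  have closed_inv: "A = E" if "closedin X A" "x \<in> A" "\<forall>g\<in>carrier G. \<forall>a\<in>A. \<phi>X g a \<in> A" for A x
    using minimal_closed_invariant[OF minX that] E_def by simp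

  define H' where "H' = {h \<in> carrier H. \<forall>x\<in>E. \<rho>' (\<psi> h x) = \<rho>' x}"
  have H'sub: "H' \<subseteq> carrier H" unfolding H'_def by blast
  have subH': "subgroup H' H"
  proof (rule group.subgroupI[OF HG H'sub])
    show "H' \<noteq> {}" using \<psi>one HG unfolding H'_def by auto
    show "inv\<^bsub>H\<^esub> a \<in> H'" if "a \<in> H'" for a
    proof -
      have a: "a \<in> carrier H" "\<forall>x\<in>E. \<rho>' (\<psi> a x) = \<rho>' x" using that H'_def by auto
      have "\<rho>' (\<psi> (inv\<^bsub>H\<^esub> a) x) = \<rho>' x" if x: "x \<in> E" for x
      proof -
        have "\<psi> a (\<psi> (inv\<^bsub>H\<^esub> a) x) = x"
          using \<psi>comp[OF a(1) Hinv[OF a(1)] x] \<psi>one[OF x] HG a(1) by simp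
        then show ?thesis using a(2) \<psi>E[OF Hinv[OF a(1)] x] by metis
      qed
      then show ?thesis using Hinv[OF a(1)] unfolding H'_def by blast
    qed
    show "a \<otimes>\<^bsub>H\<^esub> b \<in> H'" if "a \<in> H'" "b \<in> H'" for a b
      using that \<psi>comp \<psi>E Hmul unfolding H'_def by auto
  qed

  have T: "\<exists>k\<in>H'. \<psi> k x = x'" if x: "x \<in> E" "x' \<in> E" "\<rho>' x = \<rho>' x'" for x x'
  proof -
    have "\<rho> x = \<rho> x'" using comp x by metis
    then obtain k where k: "k \<in> carrier H" "\<psi> k x = x'" using trH x by blast
    define A where "A = {w \<in> topspace X. (\<rho>' \<circ> \<psi> k) w = \<rho>' w}"
    have "closedin X A" unfolding A_def
      by (rule closedin_continuous_maps_eq[OF hZ continuous_map_compose[OF ctH[rule_format, OF k(1)] ct'] ct'])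
    moreover have "x \<in> A" using x k unfolding A_def E_def by auto
    moreover have "\<forall>g\<in>carrier G. \<forall>a\<in>A. \<phi>X g a \<in> A"
    proof (intro ballI)
      fix g a assume g: "g \<in> carrier G" and a: "a \<in> A"
      hence aE: "a \<in> E" and ra: "\<rho>' (\<psi> k a) = \<rho>' a" unfolding A_def E_def by auto
      have "\<rho>' (\<psi> k (\<phi>X g a)) = \<rho>' (\<phi>X g (\<psi> k a))" using comH k g aE by simp
      also have "\<dots> = \<phi>Z g (\<rho>' (\<psi> k a))" using eq' g \<psi>E[OF k(1) aE] by simp
      also have "\<dots> = \<rho>' (\<phi>X g a)" using ra eq' g aE by simp
      finally show "\<phi>X g a \<in> A" using \<phi>E[OF g aE] unfolding A_def E_def by simp
    qed
    ultimately have "A = E" using closed_inv by blast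
    then have "k \<in> H'" using k unfolding H'_def A_def E_def by auto
    then show ?thesis using k by blast
  qed

  have Stab: "\<psi> k w = w" if "k \<in> carrier H" "x \<in> E" "\<psi> k x = x" "w \<in> E" for k x w
  proof -
    define A where "A = {w \<in> topspace X. \<psi> k w = id w}"
    have "closedin X A" unfolding A_def
      by (rule closedin_continuous_maps_eq[OF hX ctH[rule_format, OF that(1)] continuous_map_id])
    moreover have "x \<in> A" using that unfolding A_def E_def by auto
    moreover have "\<forall>g\<in>carrier G. \<forall>a\<in>A. \<phi>X g a \<in> A"
      using comH that(1) \<phi>E unfolding A_def E_def by auto
    ultimately have "A = E" using closed_inv by blast
    then show ?thesis using that unfolding A_def E_def by auto
  qed

  have C: "\<rho>' (\<psi> a x) = \<rho>' (\<psi> a x')" if ha: "a \<in> carrier H" "x \<in> E" "x' \<in> E" "\<rho>' x = \<rho>' x'" for a x x'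
  proof -
    obtain k where k: "k \<in> H'" "\<psi> k x = x'" using T ha(2-4) by blast
    have kH: "k \<in> carrier H" using k H'sub by blast
    have "\<psi> a x' = \<psi> (a \<otimes>\<^bsub>H\<^esub> k) x" using k \<psi>comp ha kH by simp
    also have "\<dots> = \<psi> (k \<otimes>\<^bsub>H\<^esub> a) x" using Hg.m_comm kH ha(1) by metis
    also have "\<dots> = \<psi> k (\<psi> a x)" using \<psi>comp ha kH by simp
    finally show ?thesis using k(1) \<psi>E[OF ha(1,2)] unfolding H'_def by auto
  qed

  define \<theta> :: "'h set \<Rightarrow> 'z \<Rightarrow> 'z" where
    "\<theta> = (\<lambda>C z. if z \<in> topspace Z then \<rho>' (\<psi> (SOME h. h \<in> C) (SOME x. x \<in> E \<and> \<rho>' x = z)) else undefined)"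
  have \<theta>lem: "\<theta> (H' #>\<^bsub>H\<^esub> a) (\<rho>' x) = \<rho>' (\<psi> a x)" if a: "a \<in> carrier H" and x: "x \<in> E" for a x
  proof -
    have zZ: "\<rho>' x \<in> topspace Z" using surj' x by blast
    have "\<one>\<^bsub>H\<^esub> \<otimes>\<^bsub>H\<^esub> a \<in> H' #>\<^bsub>H\<^esub> a"
      using subgroup.one_closed[OF subH'] unfolding r_coset_def by blast
    then have "\<exists>h. h \<in> H' #>\<^bsub>H\<^esub> a" by blast
    then have hin: "(SOME h. h \<in> H' #>\<^bsub>H\<^esub> a) \<in> H' #>\<^bsub>H\<^esub> a" by (rule someI_ex)
    then obtain k where k: "k \<in> H'" "(SOME h. h \<in> H' #>\<^bsub>H\<^esub> a) = k \<otimes>\<^bsub>H\<^esub> a"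
      unfolding r_coset_def by blast
    have kH: "k \<in> carrier H" using k H'sub by blast
    have "\<exists>x'. x' \<in> E \<and> \<rho>' x' = \<rho>' x" using x by blast
    then have x': "(SOME x'. x' \<in> E \<and> \<rho>' x' = \<rho>' x) \<in> E \<and> \<rho>' (SOME x'. x' \<in> E \<and> \<rho>' x' = \<rho>' x) = \<rho>' x"
      by (rule someI_ex)
    define x' where "x' = (SOME x'. x' \<in> E \<and> \<rho>' x' = \<rho>' x)"
    have x'E: "x' \<in> E" and rx': "\<rho>' x' = \<rho>' x" using x' unfolding x'_def by auto
    have "\<theta> (H' #>\<^bsub>H\<^esub> a) (\<rho>' x) = \<rho>' (\<psi> (k \<otimes>\<^bsub>H\<^esub> a) x')"
      unfolding \<theta>_def using zZ k(2) x'_def by simp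
    also have "\<dots> = \<rho>' (\<psi> k (\<psi> a x'))" using \<psi>comp kH a x'E by simp
    also have "\<dots> = \<rho>' (\<psi> a x')" using k(1) \<psi>E[OF a x'E] unfolding H'_def by auto
    also have "\<dots> = \<rho>' (\<psi> a x)" using C[OF a x'E x rx'] .
    finally show ?thesis .
  qed
  have nH': "H' \<lhd> H" using Hg.subgroup_imp_normal[OF subH'] .
  have Mgrp: "group (H Mod H')" using normal.factorgroup_is_group[OF nH'] .
  have carM: "carrier (H Mod H') = (\<lambda>a. H' #>\<^bsub>H\<^esub> a) ` carrier H"
    by (rule carrier_FactGroup)
  have zsurj: "\<exists>x\<in>E. z = \<rho>' x" if "z \<in> topspace Z" for z
    using surj' that by blast

  have FTZ: "fibre_transitive_action (H Mod H') \<theta> G Z \<phi>Z \<rho>''"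
    unfolding fibre_transitive_action_def
  proof (intro conjI)
    show "group_action (H Mod H') (topspace Z) \<theta>"
    proof (rule group_action_intro[OF Mgrp])
      show "\<forall>k\<in>carrier (H Mod H'). \<theta> k \<in> extensional (topspace Z)"
        unfolding \<theta>_def extensional_def by simp
      show "\<forall>k\<in>carrier (H Mod H'). \<forall>x\<in>topspace Z. \<theta> k x \<in> topspace Z"
      proof (intro ballI)
        fix C z assume C: "C \<in> carrier (H Mod H')" and z: "z \<in> topspace Z"
        obtain a where a: "a \<in> carrier H" "C = H' #>\<^bsub>H\<^esub> a" using C carM by blast
        obtain x where x: "x \<in> E" "z = \<rho>' x" using zsurj z by blast
        show "\<theta> C z \<in> topspace Z" using \<theta>lem[OF a(1) x(1)] a x surj' \<psi>E[OF a(1) x(1)] by auto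
      qed
      show "\<forall>C1\<in>carrier (H Mod H'). \<forall>C2\<in>carrier (H Mod H'). \<forall>z\<in>topspace Z.
              \<theta> (C1 \<otimes>\<^bsub>H Mod H'\<^esub> C2) z = \<theta> C1 (\<theta> C2 z)"
      proof (intro ballI)
        fix C1 C2 z assume C1: "C1 \<in> carrier (H Mod H')" and C2: "C2 \<in> carrier (H Mod H')"
          and z: "z \<in> topspace Z"
        obtain a where a: "a \<in> carrier H" "C1 = H' #>\<^bsub>H\<^esub> a" using C1 carM by blast
        obtain b where b: "b \<in> carrier H" "C2 = H' #>\<^bsub>H\<^esub> b" using C2 carM by blast
        obtain x where x: "x \<in> E" "z = \<rho>' x" using zsurj z by blast
        have "C1 \<otimes>\<^bsub>H Mod H'\<^esub> C2 = H' #>\<^bsub>H\<^esub> (a \<otimes>\<^bsub>H\<^esub> b)"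
          using a b normal.rcos_sum[OF nH'] by simp
        then have "\<theta> (C1 \<otimes>\<^bsub>H Mod H'\<^esub> C2) z = \<rho>' (\<psi> (a \<otimes>\<^bsub>H\<^esub> b) x)"
          using \<theta>lem a b x by simp
        also have "\<dots> = \<rho>' (\<psi> a (\<psi> b x))" using \<psi>comp a b x by simp
        also have "\<dots> = \<theta> C1 (\<theta> C2 z)"
          using \<theta>lem a b x \<psi>E by simp
        finally show "\<theta> (C1 \<otimes>\<^bsub>H Mod H'\<^esub> C2) z = \<theta> C1 (\<theta> C2 z)" .
      qed
      show "\<forall>z\<in>topspace Z. \<theta> \<one>\<^bsub>H Mod H'\<^esub> z = z"
      proof
        fix z assume z: "z \<in> topspace Z"
        obtain x where x: "x \<in> E" "z = \<rho>' x" using zsurj z by blast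
        have "\<one>\<^bsub>H Mod H'\<^esub> = H' #>\<^bsub>H\<^esub> \<one>\<^bsub>H\<^esub>" using H'sub by simp
        then show "\<theta> \<one>\<^bsub>H Mod H'\<^esub> z = z" using \<theta>lem[of "\<one>\<^bsub>H\<^esub>" x] x \<psi>one by simp
      qed
    qed
    have qm: "quotient_map X Z \<rho>'"
      using continuous_imp_quotient_map[OF ct' cX hZ] surj' E_def by simp
    show "\<forall>C\<in>carrier (H Mod H'). continuous_map Z Z (\<theta> C)"
    proof
      fix C assume C: "C \<in> carrier (H Mod H')"
      obtain a where a: "a \<in> carrier H" "C = H' #>\<^bsub>H\<^esub> a" using C carM by blast
      have "continuous_map X Z (\<rho>' \<circ> \<psi> a)"
        using continuous_map_compose[OF ctH[rule_format, OF a(1)] ct'] .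
      then have "continuous_map X Z (\<theta> C \<circ> \<rho>')"
        by (rule continuous_map_eq) (use \<theta>lem a E_def in auto)
      then show "continuous_map Z Z (\<theta> C)"
        using continuous_compose_quotient_map[OF qm] by blast
    qed
    show "\<forall>C\<in>carrier (H Mod H'). \<forall>g\<in>carrier G. \<forall>z\<in>topspace Z. \<theta> C (\<phi>Z g z) = \<phi>Z g (\<theta> C z)"
    proof (intro ballI)
      fix C g z assume C: "C \<in> carrier (H Mod H')" and g: "g \<in> carrier G" and z: "z \<in> topspace Z"
      obtain a where a: "a \<in> carrier H" "C = H' #>\<^bsub>H\<^esub> a" using C carM by blast
      obtain x where x: "x \<in> E" "z = \<rho>' x" using zsurj z by blast
      have "\<theta> C (\<phi>Z g z) = \<theta> C (\<rho>' (\<phi>X g x))" using eq' g x by simp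
      also have "\<dots> = \<rho>' (\<psi> a (\<phi>X g x))" using \<theta>lem a \<phi>E[OF g x(1)] by simp
      also have "\<dots> = \<rho>' (\<phi>X g (\<psi> a x))" using comH a g x by simp
      also have "\<dots> = \<phi>Z g (\<rho>' (\<psi> a x))" using eq' g \<psi>E[OF a(1) x(1)] by simp
      also have "\<dots> = \<phi>Z g (\<theta> C z)" using \<theta>lem a x by simp
      finally show "\<theta> C (\<phi>Z g z) = \<phi>Z g (\<theta> C z)" .
    qed
    show "\<forall>C\<in>carrier (H Mod H'). \<forall>z\<in>topspace Z. \<rho>'' (\<theta> C z) = \<rho>'' z"
    proof (intro ballI)
      fix C z assume C: "C \<in> carrier (H Mod H')" and z: "z \<in> topspace Z"
      obtain a where a: "a \<in> carrier H" "C = H' #>\<^bsub>H\<^esub> a" using C carM by blast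
      obtain x where x: "x \<in> E" "z = \<rho>' x" using zsurj z by blast
      show "\<rho>'' (\<theta> C z) = \<rho>'' z"
        using \<theta>lem a x comp presH \<psi>E[OF a(1) x(1)] by simp
    qed
    show "\<forall>z\<in>topspace Z. \<forall>z'\<in>topspace Z. \<rho>'' z = \<rho>'' z' \<longrightarrow> (\<exists>C\<in>carrier (H Mod H'). \<theta> C z = z')"
    proof (intro ballI impI)
      fix z z' assume z: "z \<in> topspace Z" and z': "z' \<in> topspace Z" and e: "\<rho>'' z = \<rho>'' z'"
      obtain x where x: "x \<in> E" "z = \<rho>' x" using zsurj z by blast
      obtain x' where x': "x' \<in> E" "z' = \<rho>' x'" using zsurj z' by blast
      have "\<rho> x = \<rho> x'" using comp x x' e by metis
      then obtain k where k: "k \<in> carrier H" "\<psi> k x = x'" using trH x x' by blast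
      have "H' #>\<^bsub>H\<^esub> k \<in> carrier (H Mod H')" using carM k by blast
      moreover have "\<theta> (H' #>\<^bsub>H\<^esub> k) z = z'" using \<theta>lem k x x' by simp
      ultimately show "\<exists>C\<in>carrier (H Mod H'). \<theta> C z = z'" by blast
    qed
  qed

  have FTX: "fibre_transitive_action (H\<lparr>carrier := H'\<rparr>) \<psi> G X \<phi>X \<rho>'"
    unfolding fibre_transitive_action_def
  proof (intro conjI)
    show "group_action (H\<lparr>carrier := H'\<rparr>) (topspace X) \<psi>"
    proof (rule group_action_intro)
      show "group (H\<lparr>carrier := H'\<rparr>)" using subgroup.subgroup_is_group[OF subH' HG] .
    qed (use H'sub \<psi>ext \<psi>E \<psi>one E_def in auto, metis E_def H'sub \<psi>comp subsetD)
  qed (use H'sub ctH comH T E_def H'_def in auto)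

  have fibsub: "fibre X \<rho>' z \<subseteq> fibre X \<rho> (\<rho>'' z)" for z
    using comp unfolding fibre_def E_def by auto
  have fibfin: "finite (fibre X \<rho>' z)" if "z \<in> topspace Z" for z
  proof -
    have "\<rho>'' z \<in> topspace Y" using surj'' that by blast
    then show ?thesis using fibn fibsub finite_subset by metis
  qed
  have Kle: "card (fibre X \<rho>' z1) \<le> card (fibre X \<rho>' z2)"
    if z1: "z1 \<in> topspace Z" and z2: "z2 \<in> topspace Z" for z1 z2
  proof -
    obtain x1 where x1: "x1 \<in> E" "z1 = \<rho>' x1" using zsurj z1 by blast
    obtain x2 where x2: "x2 \<in> E" "z2 = \<rho>' x2" using zsurj z2 by blast
    define K where "K = (\<lambda>w. SOME k. k \<in> H' \<and> \<psi> k x1 = w)"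
    have K: "K w \<in> H' \<and> \<psi> (K w) x1 = w" if "w \<in> fibre X \<rho>' z1" for w
    proof -
      have "\<exists>k. k \<in> H' \<and> \<psi> k x1 = w" using T[of x1 w] that x1 unfolding fibre_def E_def by auto
      then show ?thesis unfolding K_def by (rule someI_ex)
    qed
    define F where "F = (\<lambda>w. \<psi> (K w) x2)"
    have "inj_on F (fibre X \<rho>' z1)"
    proof (rule inj_onI)
      fix w w' assume w: "w \<in> fibre X \<rho>' z1" and w': "w' \<in> fibre X \<rho>' z1" and e: "F w = F w'"
      define k where "k = K w"
      define k' where "k' = K w'"
      have k: "k \<in> carrier H" "\<psi> k x1 = w" using K[OF w] H'sub k_def by auto
      have k': "k' \<in> carrier H" "\<psi> k' x1 = w'" using K[OF w'] H'sub k'_def by auto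
      have e2: "\<psi> k x2 = \<psi> k' x2" using e unfolding F_def k_def k'_def .
      have ik': "inv\<^bsub>H\<^esub> k' \<in> carrier H" using k' by simp
      have bk: "\<psi> k' (\<psi> (inv\<^bsub>H\<^esub> k') v) = v" if "v \<in> E" for v
        using \<psi>comp[OF k'(1) ik' that] \<psi>one[OF that] k' by simp
      have "\<psi> (inv\<^bsub>H\<^esub> k' \<otimes>\<^bsub>H\<^esub> k) x2 = \<psi> (inv\<^bsub>H\<^esub> k') (\<psi> k' x2)"
        using \<psi>comp ik' k x2 e2 by simp
      also have "\<dots> = x2" using \<psi>comp[OF ik' k'(1) x2(1)] \<psi>one[OF x2(1)] k' by simp
      finally have "\<psi> (inv\<^bsub>H\<^esub> k' \<otimes>\<^bsub>H\<^esub> k) x1 = x1"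
        using Stab[of "inv\<^bsub>H\<^esub> k' \<otimes>\<^bsub>H\<^esub> k" x2 x1] ik' k x1 x2 by simp
      then have "\<psi> (inv\<^bsub>H\<^esub> k') (\<psi> k x1) = x1" using \<psi>comp ik' k x1 by simp
      then have "\<psi> k x1 = \<psi> k' x1" using bk[OF \<psi>E[OF k(1) x1(1)]] by metis
      then show "w = w'" using k k' by simp
    qed
    moreover have "F ` fibre X \<rho>' z1 \<subseteq> fibre X \<rho>' z2"
    proof
      fix v assume "v \<in> F ` fibre X \<rho>' z1"
      then obtain w where w: "w \<in> fibre X \<rho>' z1" "v = F w" by blast
      have "K w \<in> H'" using K[OF w(1)] by blast
      then show "v \<in> fibre X \<rho>' z2"
        using w(2) x2 \<psi>E H'sub unfolding F_def fibre_def H'_def E_def by auto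
    qed
    ultimately show ?thesis using card_inj_on_le fibfin[OF z2] by blast
  qed
  have Keq: "card (fibre X \<rho>' z1) = card (fibre X \<rho>' z2)"
    if "z1 \<in> topspace Z" "z2 \<in> topspace Z" for z1 z2
    using Kle that by (meson antisym)
  have fibZ: "fibre Z \<rho>'' y = \<rho>' ` fibre X \<rho> y" for y
  proof
    show "fibre Z \<rho>'' y \<subseteq> \<rho>' ` fibre X \<rho> y"
    proof
      fix z assume "z \<in> fibre Z \<rho>'' y"
      then have z: "z \<in> topspace Z" "\<rho>'' z = y" unfolding fibre_def by auto
      then obtain x where "x \<in> E" "z = \<rho>' x" using zsurj by blast
      then show "z \<in> \<rho>' ` fibre X \<rho> y" using z comp unfolding fibre_def E_def by auto
    qed
    show "\<rho>' ` fibre X \<rho> y \<subseteq> fibre Z \<rho>'' y" using comp surj' unfolding fibre_def E_def by auto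
  qed
  have decomp: "card (fibre X \<rho> y) = card (fibre Z \<rho>'' y) * card (fibre X \<rho>' z0)"
    if y: "y \<in> topspace Y" and z0: "z0 \<in> topspace Z" for y z0
  proof -
    have U: "fibre X \<rho> y = \<Union> ((fibre X \<rho>') ` fibre Z \<rho>'' y)"
      using comp surj' unfolding fibre_def E_def by auto
    have I: "fibre Z \<rho>'' y = \<rho>' ` fibre X \<rho> y" by (rule fibZ)
    have finI: "finite (fibre Z \<rho>'' y)" using I fibn y by simp
    have "card (fibre X \<rho> y) = (\<Sum>z\<in>fibre Z \<rho>'' y. card (fibre X \<rho>' z))"
      unfolding U
    proof (rule card_UN_disjoint[OF finI])
      show "\<forall>i\<in>fibre Z \<rho>'' y. finite (fibre X \<rho>' i)" using fibfin unfolding fibre_def by auto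
      show "\<forall>i\<in>fibre Z \<rho>'' y. \<forall>j\<in>fibre Z \<rho>'' y. i \<noteq> j \<longrightarrow> fibre X \<rho>' i \<inter> fibre X \<rho>' j = {}"
        unfolding fibre_def by auto
    qed
    also have "\<dots> = (\<Sum>z\<in>fibre Z \<rho>'' y. card (fibre X \<rho>' z0))"
    proof (rule sum.cong[OF refl])
      fix z assume "z \<in> fibre Z \<rho>'' y"
      then have "z \<in> topspace Z" unfolding fibre_def by simp
      then show "card (fibre X \<rho>' z) = card (fibre X \<rho>' z0)" using Keq z0 by blast
    qed
    finally show ?thesis by simp
  qed
  have fibZfin: "finite (fibre Z \<rho>'' y)" if "y \<in> topspace Y" for y
  proof -
    have "fibre Z \<rho>'' y = \<rho>' ` fibre X \<rho> y" by (rule fibZ)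
    then show ?thesis using fibn that by simp
  qed
  have fmZ: "factor_map G Z \<phi>Z Y \<phi>Y \<rho>''" by fact
  have "\<exists>m. m dvd n \<and> n_to_one G Z \<phi>Z Y \<phi>Y \<rho>'' m"
  proof (cases "topspace Y = {}")
    case True
    then show ?thesis using fmZ unfolding n_to_one_def by auto
  next
    case False
    then obtain y0 where y0: "y0 \<in> topspace Y" by blast
    then obtain z0 where z0: "z0 \<in> topspace Z" using surj'' by blast
    obtain x0 where x0: "x0 \<in> E" "z0 = \<rho>' x0" using zsurj z0 by blast
    have "x0 \<in> fibre X \<rho>' z0" using x0 unfolding fibre_def E_def by simp
    then have kpos: "card (fibre X \<rho>' z0) > 0" using fibfin[OF z0] card_gt_0_iff by blast
    define m where "m = card (fibre Z \<rho>'' y0)"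
    have n: "n = m * card (fibre X \<rho>' z0)" using decomp[OF y0 z0] fibn y0 m_def by simp
    have "card (fibre Z \<rho>'' y) = m" if y: "y \<in> topspace Y" for y
    proof -
      have "n = card (fibre Z \<rho>'' y) * card (fibre X \<rho>' z0)" using decomp[OF y z0] fibn y by simp
      then show ?thesis using n kpos by simp
    qed
    then have "n_to_one G Z \<phi>Z Y \<phi>Y \<rho>'' m" using fmZ fibZfin unfolding n_to_one_def by blast
    moreover have "m dvd n" using n by simp
    ultimately show ?thesis by blast
  qed
  then show ?thesis using subH' FTZ FTX by blast
qed

end
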